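(* Let $(A_C,\mathcal R_A)$ be an autocatalytic core of a CRN. Then $|A_C|=|\mathcal R_A|$ and its stoichiometric matrix $\overline{\mathbb S}=(\mathbb S)_{A_C}^{\mathcal R_A}$ is a square invertible matrix.
   Context: A chemical reaction network (CRN) consists of a finite species set $\mathcal S$ and a finite set $\mathcal R$ of reactions; each reaction $r$ is written $r^-\to r^+$ with input complex $r^-\in\mathbb Z_{\ge0}^{\mathcal S}$ and output complex $r^+\in\mathbb Z_{\ge0}^{\mathcal S}$. The input and output matrices $\mathbb S^-,\mathbb S^+$ are the $\mathcal S\times\mathcal R$ matrices whose column indexed by $r$ is $r^-$, resp. $r^+$; the stoichiometric matrix is $\mathbb S=\mathbb S^+-\mathbb S^-$. For a matrix $\mathbb A$ with rows indexed by $\mathcal S$ and columns by $\mathcal R$ and subsets $M\subseteq\mathcal S$, $N\subseteq\mathcal R$, $(\mathbb A)_M^N$ is the submatrix with rows in $M$ and columns in $N$. For a vector $\mathbf v$: $\mathbf v\gg\mathbf 0$ means all entries are $>0$; $\mathbf v>\mathbf 0$ (semi-positive) means all entries are $\ge0$ and $\mathbf v\ne\mathbf 0$. A motif is a pair $(\mathcal M,\mathcal R')$ with $\mathcal M\subseteq\mathcal S$, $\mathcal R'\subseteq\mathcal R$. It is exclusively autocatalytic if: (i) there is $\mathbf v\in\mathbb R^{\mathcal R'}$, $\mathbf v\gg\mathbf0$, with $(\mathbb S)_{\mathcal M}^{\mathcal R'}\mathbf v\gg\mathbf 0$; (ii) every row of $(\mathbb S^-)_{\mathcal M}^{\mathcal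 R'}$ is semi-positive; (iii) every column of $(\mathbb S^-)_{\mathcal M}^{\mathcal R'}$ is semi-positive. An autocatalytic core is an exclusively autocatalytic motif $(A_C,\mathcal R_A)$ such that no motif $(\mathcal M',\mathcal R'')\neq(A_C,\mathcal R_A)$ with $\mathcal M'\subseteq A_C$ and $\mathcal R''\subseteq\mathcal R_A$ is exclusively autocatalytic; $A_C$ is called its core set. *)

theory Defs
  imports "HOL-Analysis.Analysis"
begin

text \<open>A CRN is given by finite sets of species S :: 's set and reactions R :: 'r set,
  together with the input matrix Sm and output matrix Sp (entries are natural numbers,
  Sm s r = coefficient of species s in the input complex of reaction r).\<close>

definition stoich :: "('s \<Rightarrow> 'r \<Rightarrow> nat) \<Rightarrow> ('s \<Rightarrow> 'r \<Rightarrow> nat) \<Rightarrow> 's \<Rightarrow> 'r \<Rightarrow> real" where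
  "stoich Sm Sp s r = real (Sp s r) - real (Sm s r)"

text \<open>Exclusively autocatalytic motif (M, R'). Nonemptiness of M is part of the notion
  (a motif with no species is not considered; with M nonempty, (ii) forces R' nonempty).\<close>
definition excl_autocatalytic ::
  "('s \<Rightarrow> 'r \<Rightarrow> nat) \<Rightarrow> ('s \<Rightarrow> 'r \<Rightarrow> nat) \<Rightarrow> 's set \<Rightarrow> 'r set \<Rightarrow> bool" where
  "excl_autocatalytic Sm Sp M R' \<longleftrightarrow>
     M \<noteq> {} \<and>
     (\<exists>v :: 'r \<Rightarrow> real. (\<forall>r\<in>R'. v r > 0) \<and>
        (\<forall>s\<in>M. (\<Sum>r\<in>R'. stoich Sm Sp s r * v r) > 0)) \<and>
     (\<forall>s\<in>M. \<exists>r\<in>R'. Sm s r > 0) \<and>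
     (\<forall>r\<in>R'. \<exists>s\<in>M. Sm s r > 0)"

definition autocatalytic_core ::
  "'s set \<Rightarrow> 'r set \<Rightarrow> ('s \<Rightarrow> 'r \<Rightarrow> nat) \<Rightarrow> ('s \<Rightarrow> 'r \<Rightarrow> nat) \<Rightarrow> 's set \<Rightarrow> 'r set \<Rightarrow> bool" where
  "autocatalytic_core S R Sm Sp AC RA \<longleftrightarrow>
     AC \<subseteq> S \<and> RA \<subseteq> R \<and> excl_autocatalytic Sm Sp AC RA \<and>
     (\<forall>M' R''. M' \<subseteq> AC \<and> R'' \<subseteq> RA \<and> (M', R'') \<noteq> (AC, RA) \<longrightarrow>
        \<not> excl_autocatalytic Sm Sp M' R'')"

definition invertible_on :: "'a set \<Rightarrow> 'b set \<Rightarrow> ('a \<Rightarrow> 'b \<Rightarrow> real) \<Rightarrow> bool" where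
  "invertible_on M N A \<longleftrightarrow>
     (\<exists>B :: 'b \<Rightarrow> 'a \<Rightarrow> real.
        (\<forall>i\<in>M. \<forall>j\<in>M. (\<Sum>k\<in>N. A i k * B k j) = (if i = j then 1 else 0)) \<and>
        (\<forall>k\<in>N. \<forall>l\<in>N. (\<Sum>i\<in>M. B k i * A i l) = (if k = l then 1 else 0)))"

end

theory Submission
  imports Defs "Jordan_Normal_Form.Determinant"
begin

lemma core_basic:
  assumes "finite S" "finite R" "autocatalytic_core S R Sm Sp AC RA"
  shows "finite AC" "finite RA" "AC \<noteq> {}" "RA \<noteq> {}"
  using assms unfolding autocatalytic_core_def excl_autocatalytic_def
  by (auto intro: finite_subset)

lemma kernel_neg:
  assumes fin: "finite RA" and core: "autocatalytic_core S R Sm Sp AC RA"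
    and w: "\<forall>s\<in>AC. (\<Sum>r\<in>RA. stoich Sm Sp s r * w r) = 0"
    and r1: "r1 \<in> RA" "w r1 < 0"
  shows False
proof -
  have ex: "excl_autocatalytic Sm Sp AC RA" and sub: "\<forall>M' R''. M' \<subseteq> AC \<and> R'' \<subseteq> RA \<and> (M', R'') \<noteq> (AC, RA) \<longrightarrow>
        \<not> excl_autocatalytic Sm Sp M' R''" using core unfolding autocatalytic_core_def by auto
  from ex obtain v where vpos: "\<forall>r\<in>RA. v r > 0" and vS: "\<forall>s\<in>AC. (\<Sum>r\<in>RA. stoich Sm Sp s r * v r) > 0"
    and ne: "AC \<noteq> {}" and ii: "\<forall>s\<in>AC. \<exists>r\<in>RA. Sm s r > 0" and iii: "\<forall>r\<in>RA. \<exists>s\<in>AC. Sm s r > 0"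
    unfolding excl_autocatalytic_def by blast
  define N where "N = {r\<in>RA. w r < 0}"
  have Nfin: "finite N" and Nne: "N \<noteq> {}" using fin r1 unfolding N_def by auto
  define t where "t = Min ((\<lambda>r. v r / (- w r)) ` N)"
  have tle: "t \<le> v r / (- w r)" if "r \<in> N" for r
    unfolding t_def using Nfin that by auto
  have tpos: "t > 0" unfolding t_def using Nfin Nne vpos by (auto simp: N_def divide_pos_neg)
  have "t \<in> (\<lambda>r. v r / (- w r)) ` N" unfolding t_def using Nfin Nne by (intro Min_in) auto
  then obtain r0 where r0: "r0 \<in> N" "t = v r0 / (- w r0)" by (rule imageE) simp
  define v' where "v' r = v r + t * w r" for r
  have v'nn: "v' r \<ge> 0" if "r \<in> RA" for r
  proof (cases "w r < 0")
    case True
    then have "r \<in> N" using that N_def by auto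
    from tle[OF this] True have "t * (- w r) \<le> v r" by (simp add: field_simps)
    then show ?thesis unfolding v'_def by simp
  next
    case False
    then show ?thesis unfolding v'_def using tpos vpos that
      by (metis add_nonneg_nonneg less_eq_real_def not_le zero_le_mult_iff)
  qed
  have v'r0: "v' r0 = 0" using r0 unfolding v'_def N_def by (auto simp: field_simps)
  have sumv': "(\<Sum>r\<in>RA. stoich Sm Sp s r * v' r) = (\<Sum>r\<in>RA. stoich Sm Sp s r * v r)" if "s \<in> AC" for s
  proof -
    have "(\<Sum>r\<in>RA. stoich Sm Sp s r * v' r) = (\<Sum>r\<in>RA. stoich Sm Sp s r * v r) + t * (\<Sum>r\<in>RA. stoich Sm Sp s r * w r)"
      unfolding v'_def by (simp add: algebra_simps sum.distrib sum_distrib_left)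
    then show ?thesis using w that by simp
  qed
  define R2 where "R2 = {r\<in>RA. v' r > 0}"
  define M2 where "M2 = {s\<in>AC. \<exists>r\<in>R2. Sm s r > 0}"
  have R2sub: "R2 \<subseteq> RA" and M2sub: "M2 \<subseteq> AC" unfolding R2_def M2_def by auto
  have sumR2: "(\<Sum>r\<in>R2. stoich Sm Sp s r * v' r) = (\<Sum>r\<in>RA. stoich Sm Sp s r * v' r)" for s
  proof (rule sum.mono_neutral_left[OF fin R2sub], rule ballI)
    fix r assume r: "r \<in> RA - R2"
    then have "v' r \<ge> 0" "\<not> v' r > 0" using v'nn unfolding R2_def by auto
    then have "v' r = 0" by linarith
    then show "stoich Sm Sp s r * v' r = 0" by simp
  qed
  have r0R2: "r0 \<notin> R2" using v'r0 unfolding R2_def by auto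
  obtain s0 where s0: "s0 \<in> AC" using ne by auto
  have "(\<Sum>r\<in>R2. stoich Sm Sp s0 r * v' r) > 0" unfolding sumR2[of s0] sumv'[OF s0] using vS s0 by blast
  then have "R2 \<noteq> {}" by auto
  then obtain r2 where r2: "r2 \<in> R2" by blast
  then obtain s2 where "s2 \<in> AC" "Sm s2 r2 > 0" using iii R2sub by blast
  then have M2ne: "M2 \<noteq> {}" using r2 unfolding M2_def by auto
  have "excl_autocatalytic Sm Sp M2 R2"
    unfolding excl_autocatalytic_def
  proof (intro conjI)
    show "M2 \<noteq> {}" by fact
    show "\<exists>v. (\<forall>r\<in>R2. 0 < v r) \<and> (\<forall>s\<in>M2. 0 < (\<Sum>r\<in>R2. stoich Sm Sp s r * v r))"
    proof (rule exI[of _ v'], intro conjI ballI)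
      fix r assume "r \<in> R2" then show "0 < v' r" unfolding R2_def by simp
    next
      fix s assume s: "s \<in> M2"
      then have sA: "s \<in> AC" using M2sub by auto
      show "0 < (\<Sum>r\<in>R2. stoich Sm Sp s r * v' r)"
        unfolding sumR2[of s] sumv'[OF sA] using vS sA by blast
    qed
    show "\<forall>s\<in>M2. \<exists>r\<in>R2. 0 < Sm s r" unfolding M2_def by auto
    show "\<forall>r\<in>R2. \<exists>s\<in>M2. 0 < Sm s r" using iii R2sub unfolding M2_def by blast
  qed
  moreover have "(M2, R2) \<noteq> (AC, RA)" using r0R2 r0 N_def by auto
  ultimately show False using sub M2sub R2sub by blast
qed

lemma kernel_trivial:
  assumes fin: "finite RA" and core: "autocatalytic_core S R Sm Sp AC RA"
    and w: "\<forall>s\<in>AC. (\<Sum>r\<in>RA. stoich Sm Sp s r * w r) = 0"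
    and r1: "r1 \<in> RA" "w r1 \<noteq> 0"
  shows False
proof (cases "w r1 < 0")
  case True then show ?thesis using kernel_neg[OF fin core w r1(1)] by auto
next
  case False
  have "\<forall>s\<in>AC. (\<Sum>r\<in>RA. stoich Sm Sp s r * (- w r)) = 0" using w
    by (simp add: sum_negf)
  moreover have "- w r1 < 0" using False r1 by auto
  ultimately show ?thesis using kernel_neg[OF fin core _ r1(1), of "\<lambda>r. - w r"] by auto
qed

lemma card_le:
  assumes finA: "finite AC" and fin: "finite RA" and core: "autocatalytic_core S R Sm Sp AC RA"
  shows "card AC \<le> card RA"
proof (rule ccontr)
  assume lt: "\<not> card AC \<le> card RA"
  have ex: "excl_autocatalytic Sm Sp AC RA" and sub: "\<forall>M' R''. M' \<subseteq> AC \<and> R'' \<subseteq> RA \<and> (M', R'') \<noteq> (AC, RA) \<longrightarrow>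
        \<not> excl_autocatalytic Sm Sp M' R''" using core unfolding autocatalytic_core_def by auto
  from ex obtain v where vpos: "\<forall>r\<in>RA. v r > 0" and vS: "\<forall>s\<in>AC. (\<Sum>r\<in>RA. stoich Sm Sp s r * v r) > 0"
    and ne: "AC \<noteq> {}" and ii: "\<forall>s\<in>AC. \<exists>r\<in>RA. Sm s r > 0" and iii: "\<forall>r\<in>RA. \<exists>s\<in>AC. Sm s r > 0"
    unfolding excl_autocatalytic_def by blast
  obtain g where g: "\<forall>r\<in>RA. g r \<in> AC \<and> Sm (g r) r > 0" using iii by metis
  define M2 where "M2 = g ` RA"
  have M2sub: "M2 \<subseteq> AC" using g unfolding M2_def by auto
  have "card M2 \<le> card RA" unfolding M2_def using fin card_image_le by blast
  then have M2neq: "M2 \<noteq> AC" using lt by auto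
  have RAne: "RA \<noteq> {}" using ne ii by auto
  have "excl_autocatalytic Sm Sp M2 RA"
    unfolding excl_autocatalytic_def
  proof (intro conjI)
    show "M2 \<noteq> {}" using RAne unfolding M2_def by auto
    show "\<exists>v. (\<forall>r\<in>RA. 0 < v r) \<and> (\<forall>s\<in>M2. 0 < (\<Sum>r\<in>RA. stoich Sm Sp s r * v r))"
      using vpos vS M2sub by blast
    show "\<forall>s\<in>M2. \<exists>r\<in>RA. 0 < Sm s r" using g unfolding M2_def by auto
    show "\<forall>r\<in>RA. \<exists>s\<in>M2. 0 < Sm s r" using g unfolding M2_def by auto
  qed
  then show False using sub M2sub M2neq by blast
qed


theorem mainTheorem5:
  fixes S :: "'s set" and R :: "'r set"
    and Sm Sp :: "'s \<Rightarrow> 'r \<Rightarrow> nat"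
    and AC :: "'s set" and RA :: "'r set"
  assumes "finite S" and "finite R"
    and "autocatalytic_core S R Sm Sp AC RA"
  shows "card AC = card RA \<and> invertible_on AC RA (stoich Sm Sp)"
proof -
  note cb = core_basic[OF assms]
  define n where "n = card AC"
  define m where "m = card RA"
  have nm: "n \<le> m" unfolding n_def m_def using card_le[OF cb(1,2) assms(3)] .
  obtain a where a: "bij_betw a {0..<n} AC" unfolding n_def using ex_bij_betw_nat_finite[OF cb(1)] by blast
  obtain b where b: "bij_betw b {0..<m} RA" unfolding m_def using ex_bij_betw_nat_finite[OF cb(2)] by blast
  define ia where "ia = inv_into {0..<n} a"
  define ib where "ib = inv_into {0..<m} b"
  have ia: "ia s < n" "a (ia s) = s" if "s \<in> AC" for s
    using that a unfolding ia_def bij_betw_def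
    by (auto intro: inv_into_into f_inv_into_f)
  have ib: "ib r < m" "b (ib r) = r" if "r \<in> RA" for r
    using that b unfolding ib_def bij_betw_def
    by (auto intro: inv_into_into f_inv_into_f)
  have ia2: "ia (a i) = i" if "i < n" for i
    using that a unfolding ia_def bij_betw_def by (auto intro: inv_into_f_f)
  have ib2: "ib (b j) = j" if "j < m" for j
    using that b unfolding ib_def bij_betw_def by (auto intro: inv_into_f_f)
  have aA: "a i \<in> AC" if "i < n" for i using a that unfolding bij_betw_def by auto
  have bR: "b j \<in> RA" if "j < m" for j using b that unfolding bij_betw_def by auto
  have reidx: "(\<Sum>k\<in>RA. g k) = (\<Sum>l\<in>{0..<m}. g (b l))" for g :: "'r \<Rightarrow> real"
    using sum.reindex_bij_betw[OF b, of g] by simp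
  define A :: "real mat" where "A = mat m m (\<lambda>(i,j). if i < n then stoich Sm Sp (a i) (b j) else 0)"
  have Ac: "A \<in> carrier_mat m m" unfolding A_def by simp
  have detA: "det A \<noteq> 0"
  proof
    assume "det A = 0"
    then obtain x where x: "x \<in> carrier_vec m" "x \<noteq> 0\<^sub>v m" "A *\<^sub>v x = 0\<^sub>v m"
      using det_0_iff_vec_prod_zero[OF Ac] by blast
    obtain j where j: "j < m" "x $ j \<noteq> 0" using x(1,2) by (metis carrier_vecD eq_vecI index_zero_vec(1,2))
    define w where "w r = x $ ib r" for r
    have "\<forall>s\<in>AC. (\<Sum>r\<in>RA. stoich Sm Sp s r * w r) = 0"
    proof
      fix s assume s: "s \<in> AC"
      have "(\<Sum>r\<in>RA. stoich Sm Sp s r * w r) = (\<Sum>l\<in>{0..<m}. stoich Sm Sp s (b l) * x $ l)"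
        unfolding reidx w_def by (rule sum.cong) (auto simp: ib2)
      also have "\<dots> = (A *\<^sub>v x) $ ia s"
        using ia[OF s] nm x(1) unfolding A_def
        by (auto simp: scalar_prod_def row_def intro!: sum.cong)
      also have "\<dots> = 0" using x(3) ia[OF s] nm by simp
      finally show "(\<Sum>r\<in>RA. stoich Sm Sp s r * w r) = 0" .
    qed
    moreover have "w (b j) \<noteq> 0" using j unfolding w_def by (simp add: ib2)
    ultimately show False using kernel_trivial[OF cb(2) assms(3)] bR[OF j(1)] by blast
  qed
  have nm2: "n = m"
  proof (rule ccontr)
    assume "n \<noteq> m"
    then have lt: "n < m" using nm by simp
    have tz: "transpose_mat A *\<^sub>v unit_vec m (m - 1) = 0\<^sub>v m"
    proof (rule eq_vecI)
      fix i assume i: "i < dim_vec (0\<^sub>v m :: real vec)"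
      then have i': "i < m" by simp
      have "(transpose_mat A *\<^sub>v unit_vec m (m - 1)) $ i = (\<Sum>l\<in>{0..<m}. A $$ (l, i) * unit_vec m (m - 1) $ l)"
        using i' Ac by (simp add: scalar_prod_def)
      also have "\<dots> = (\<Sum>l\<in>{0..<m}. if l = m - 1 then A $$ (l, i) else 0)"
        by (rule sum.cong) (auto simp: unit_vec_def)
      also have "\<dots> = A $$ (m - 1, i)"
        using lt by (simp add: sum.delta)
      also have "\<dots> = 0" using lt i' unfolding A_def by simp
      finally show "(transpose_mat A *\<^sub>v unit_vec m (m - 1)) $ i = 0\<^sub>v m $ i" using i' by simp
    qed (use Ac in simp)
    have unz: "unit_vec m (m - 1) \<noteq> (0\<^sub>v m :: real vec)"
      using lt by (metis diff_less index_unit_vec(1) index_zero_vec(1) less_nat_zero_code not_gr_zero zero_neq_one)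
    have AT: "transpose_mat A \<in> carrier_mat m m" using Ac by simp
    have uc: "unit_vec m (m - 1) \<in> (carrier_vec m :: real vec set)" by (rule unit_vec_carrier)
    have "det (transpose_mat A) = 0"
      using det_0_iff_vec_prod_zero[OF AT] uc unz tz by blast
    then show False using det_transpose[OF Ac] detA by simp
  qed
  from det_non_zero_imp_unit[OF Ac detA, of "()"]
  obtain B where B: "B \<in> carrier_mat m m" "B * A = 1\<^sub>m m" "A * B = 1\<^sub>m m"
    unfolding Units_def ring_mat_def by auto
  define Bf where "Bf k s = B $$ (ib k, ia s)" for k s
  have "invertible_on AC RA (stoich Sm Sp)"
    unfolding invertible_on_def
  proof (rule exI[of _ Bf], intro conjI ballI)
    fix i j assume i: "i \<in> AC" and j: "j \<in> AC"
    have "(\<Sum>k\<in>RA. stoich Sm Sp i k * Bf k j) = (\<Sum>l\<in>{0..<m}. A $$ (ia i, l) * B $$ (l, ia j))"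
      unfolding reidx Bf_def A_def using ia[OF i] ia[OF j] nm2
      by (intro sum.cong) (auto simp: ib2)
    also have "\<dots> = (A * B) $$ (ia i, ia j)"
      using ia[OF i] ia[OF j] nm2 Ac B(1) by (simp add: scalar_prod_def row_def col_def)
    also have "\<dots> = (if i = j then 1 else 0)"
    proof -
      have e: "ia i = ia j \<longleftrightarrow> i = j" using ia(2)[OF i] ia(2)[OF j] by metis
      have "ia i < m" "ia j < m" using ia(1)[OF i] ia(1)[OF j] nm2 by auto
      then show ?thesis unfolding B(3) using e by simp
    qed
    finally show "(\<Sum>k\<in>RA. stoich Sm Sp i k * Bf k j) = (if i = j then 1 else 0)" .
  next
    fix k l assume k: "k \<in> RA" and l: "l \<in> RA"
    have "(\<Sum>i\<in>AC. Bf k i * stoich Sm Sp i l) = (\<Sum>i\<in>{0..<n}. Bf k (a i) * stoich Sm Sp (a i) l)"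
      using sum.reindex_bij_betw[OF a, of "\<lambda>i. Bf k i * stoich Sm Sp i l"] by simp
    also have "\<dots> = (\<Sum>i\<in>{0..<m}. B $$ (ib k, i) * A $$ (i, ib l))"
      unfolding Bf_def A_def using ib[OF k] ib[OF l] nm2
      by (intro sum.cong) (auto simp: ia2)
    also have "\<dots> = (B * A) $$ (ib k, ib l)"
      using ib[OF k] ib[OF l] Ac B(1) by (simp add: scalar_prod_def row_def col_def)
    also have "\<dots> = (if k = l then 1 else 0)"
    proof -
      have e: "ib k = ib l \<longleftrightarrow> k = l" using ib(2)[OF k] ib(2)[OF l] by metis
      have "ib k < m" "ib l < m" using ib(1)[OF k] ib(1)[OF l] by auto
      then show ?thesis unfolding B(2) using e by simp
    qed
    finally show "(\<Sum>i\<in>AC. Bf k i * stoich Sm Sp i l) = (if k = l then 1 else 0)" .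
  qed
  then show ?thesis using nm2 unfolding n_def m_def by simp
qed

end
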